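(* Let $\tau\in\mathbb{C}$ with $\operatorname{Im}(\tau)>0$ and $|\tau|=1$, and let $\Gamma=\{m+n\tau:m,n\in\mathbb{Z}\}$. Let $I$ be an antiholomorphic involution of $\mathbb{C}/\Gamma$ induced by $z\mapsto a\bar z+b$ with $a,b\in\mathbb{C}$ and $a\notin\{1,-1\}$. Then $I$ has a fixpoint.
   Context: An antiholomorphic involution is an antiholomorphic map $I$ with $I\circ I=\mathrm{id}$. *)

theory Defs
  imports Complex_Main
begin

definition lattice :: "complex \<Rightarrow> complex set" where
  "lattice \<tau> = {of_int m + of_int n * \<tau> | m n :: int. True}"

definition antilin :: "complex \<Rightarrow> complex \<Rightarrow> complex \<Rightarrow> complex" where
  "antilin a b z = a * cnj z + b"

end

theory Submission imports Defs begin
lemma no_sq_between: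
  fixes k n :: int assumes "0 \<le> k" "k^2 < n^2" "n^2 < (k+1)^2" shows False
proof -
  have "\<bar>k\<bar> < \<bar>n\<bar>" using assms(2) by (metis abs_le_square_iff linorder_not_le)
  moreover have "\<bar>n\<bar> < \<bar>k+1\<bar>" using assms(3) by (metis abs_le_square_iff linorder_not_le)
  ultimately show False using assms(1) by simp
qed

lemma int_cls:
  fixes p q s :: int
  assumes h1: "p^2 + q*s = 1" and h2: "(q-s)^2 < 4*p^2"
  shows "(s = 0 \<and> p^2 = 1) \<or> (s^2 = 1 \<and> q = 0 \<and> p^2 = 1)"
proof -
  have "(q+s)^2 < 4" using h1 h2 by (simp add: power2_eq_square algebra_simps)
  hence "\<bar>q+s\<bar> < 2"
    by (metis abs_le_square_iff abs_numeral linorder_not_le power2_eq_square numeral_times_numeral num_double)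
  hence e: "q = - s \<or> q = 1 - s \<or> q = -1 - s" by auto
  show ?thesis
  proof (cases "s = 0")
    case True then show ?thesis using h1 by simp
  next
    case sn: False
    from e show ?thesis
    proof (elim disjE)
      assume q: "q = - s"
      have pp: "p^2 = s^2 + 1" using h1 by (simp add: q power2_eq_square algebra_simps)
      have "\<bar>s\<bar>^2 < p^2" using pp by simp
      moreover have "p^2 < (\<bar>s\<bar>+1)^2" using pp sn by (simp add: power2_eq_square algebra_simps)
      ultimately show ?thesis using no_sq_between[of "\<bar>s\<bar>" p] by simp
    next
      assume q: "q = 1 - s"
      have pp: "p^2 = s^2 - s + 1" using h1 by (simp add: q power2_eq_square algebra_simps)
      show ?thesis
      proof (cases "s = 1")
        case True then show ?thesis using q pp by simp
      next
        case False
        show ?thesis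
        proof (cases "s \<ge> 2")
          case True
          have "(s-1)^2 < p^2" using pp True by (simp add: power2_eq_square algebra_simps)
          moreover have "p^2 < (s-1+1)^2" using pp True by (simp add: power2_eq_square algebra_simps)
          ultimately show ?thesis using no_sq_between[of "s-1" p] True by simp
        next
          case False
          hence s: "s \<le> -1" using sn \<open>s \<noteq> 1\<close> by simp
          have "(-s)^2 < p^2" using pp s by (simp add: power2_eq_square algebra_simps)
          moreover have "p^2 < (-s+1)^2" using pp s by (simp add: power2_eq_square algebra_simps)
          ultimately show ?thesis using no_sq_between[of "-s" p] s by simp
        qed
      qed
    next
      assume q: "q = -1 - s"
      have pp: "p^2 = s^2 + s + 1" using h1 by (simp add: q power2_eq_square algebra_simps)
      show ?thesis
      proof (cases "s = -1")
        case True then show ?thesis using q pp by simp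
      next
        case False
        show ?thesis
        proof (cases "s \<le> -2")
          case True
          have "(-s-1)^2 < p^2" using pp True by (simp add: power2_eq_square algebra_simps)
          moreover have "p^2 < (-s-1+1)^2" using pp True by (simp add: power2_eq_square algebra_simps)
          ultimately show ?thesis using no_sq_between[of "-s-1" p] True by simp
        next
          case False
          hence s: "s \<ge> 1" using sn \<open>s \<noteq> -1\<close> by simp
          have "s^2 < p^2" using pp s by (simp add: power2_eq_square algebra_simps)
          moreover have "p^2 < (s+1)^2" using pp s by (simp add: power2_eq_square algebra_simps)
          ultimately show ?thesis using no_sq_between[of "s" p] s by simp
        qed
      qed
    qed
  qed
qed

lemma lat_iff: "z \<in> lattice \<tau> \<longleftrightarrow> (\<exists>m n::int. z = of_int m + of_int n * \<tau>)"
  by (auto simp: lattice_def)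

lemma lat_diff: "z \<in> lattice \<tau> \<Longrightarrow> w \<in> lattice \<tau> \<Longrightarrow> z - w \<in> lattice \<tau>"
proof -
  assume "z \<in> lattice \<tau>" "w \<in> lattice \<tau>"
  then obtain m n m' n' :: int where "z = of_int m + of_int n * \<tau>" "w = of_int m' + of_int n' * \<tau>"
    by (auto simp: lat_iff)
  hence "z - w = of_int (m - m') + of_int (n - n') * \<tau>" by (simp add: algebra_simps)
  thus ?thesis unfolding lat_iff by blast
qed

lemma coord_zero:
  fixes \<tau> :: complex and x y :: real
  assumes "Im \<tau> > 0" "of_real x + of_real y * \<tau> = 0"
  shows "x = 0 \<and> y = 0"
proof -
  have "Im (of_real x + of_real y * \<tau>) = 0" using assms(2) by simp
  hence "y = 0" using assms(1) by simp
  with assms(2) show ?thesis by simp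
qed

theorem lemma2p7:
  fixes \<tau> a b :: complex
  assumes "Im \<tau> > 0" and "cmod \<tau> = 1"
    and descends: "\<forall>z w. z - w \<in> lattice \<tau> \<longrightarrow> antilin a b z - antilin a b w \<in> lattice \<tau>"
    and involution: "\<forall>z. antilin a b (antilin a b z) - z \<in> lattice \<tau>"
    and "a \<noteq> 1" and "a \<noteq> -1"
  shows "\<exists>z. antilin a b z - z \<in> lattice \<tau>"
proof -
  define r where "r = Re \<tau>"
  define t where "t = Im \<tau>"
  have t0: "t > 0" using assms(1) by (simp add: t_def)
  have rt: "r^2 + t^2 = 1" using assms(2) unfolding r_def t_def cmod_def by simp
  have r1: "r^2 < 1" using rt t0 by (smt (verit) zero_less_power)
  have tt: "\<tau> * cnj \<tau> = 1" using complex_norm_square[of \<tau>] assms(2) by simp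
  define N where "N = a * cnj a"
  define c where "c = a * cnj b + b"
  have ff: "antilin a b (antilin a b z) = N * z + c" for z
    by (simp add: antilin_def N_def c_def algebra_simps)
  have cL: "c \<in> lattice \<tau>" using involution[rule_format, of 0] ff[of 0] by simp
  have N1: "N = 1"
  proof (rule ccontr)
    assume "N \<noteq> 1"
    define z where "z = (1/2) / (N - 1)"
    have "N * z + c - z \<in> lattice \<tau>" using involution[rule_format, of z] ff[of z] by simp
    moreover have "(N - 1) * z = 1/2" using \<open>N \<noteq> 1\<close> by (simp add: z_def)
    hence "N * z + c - z = 1/2 + c" by (metis add.commute add_diff_eq left_diff_distrib' mult_1)
    ultimately have "(1/2 + c) - c \<in> lattice \<tau>" using cL lat_diff by metis
    then obtain m n :: int where e: "1/2 = of_int m + of_int n * \<tau>" by (auto simp: lat_iff)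
    hence "Im (1/2 :: complex) = Im (of_int m + of_int n * \<tau>)" by metis
    hence "n = 0" using t0 by (simp add: t_def)
    with e have "(1/2::complex) = of_int m" by simp
    hence "(1/2::real) = of_int m" by (metis Re_complex_of_real of_real_of_int_eq of_real_divide of_real_1 of_real_numeral)
    hence "(1::real) = 2 * of_int m" by simp
    hence "(1::int) = 2 * m" by linarith
    thus False by presburger
  qed
  have oneL: "1 \<in> lattice \<tau>" unfolding lat_iff by (rule exI[of _ 1], rule exI[of _ 0]) simp
  have tauL: "\<tau> \<in> lattice \<tau>" unfolding lat_iff by (rule exI[of _ 0], rule exI[of _ 1]) simp
  have "antilin a b 1 - antilin a b 0 \<in> lattice \<tau>" using descends oneL by (metis diff_zero)
  hence "a \<in> lattice \<tau>" by (simp add: antilin_def)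
  then obtain p s :: int where a: "a = of_int p + of_int s * \<tau>" by (auto simp: lat_iff)
  have "antilin a b \<tau> - antilin a b 0 \<in> lattice \<tau>" using descends tauL by (metis diff_zero)
  hence "a * cnj \<tau> \<in> lattice \<tau>" by (simp add: antilin_def)
  then obtain q w :: int where aq: "a * cnj \<tau> = of_int q + of_int w * \<tau>" by (auto simp: lat_iff)
  have "a * cnj \<tau> = of_int p * cnj \<tau> + of_int s" using tt by (simp add: a algebra_simps)
  hence E: "of_int q + of_int w * \<tau> = of_int p * cnj \<tau> + of_int s" using aq by simp
  hence "Im (of_int q + of_int w * \<tau>) = Im (of_int p * cnj \<tau> + of_int s)" by metis
  hence "w * t = - p * t" by (simp add: t_def)
  hence "(real_of_int w + real_of_int p) * t = 0" by (simp add: algebra_simps)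
  hence "real_of_int w = real_of_int (- p)" using t0 by simp
  hence wp: "w = - p" by linarith
  from E have "Re (of_int q + of_int w * \<tau>) = Re (of_int p * cnj \<tau> + of_int s)" by metis
  hence qr: "real_of_int q = 2 * p * r + s" using wp by (simp add: r_def)
  have "Re N = 1" using N1 by simp
  hence "(p + s*r)^2 + (s*t)^2 = 1" by (simp add: N_def a complex_mult_cnj r_def t_def power2_eq_square)
  hence "p^2 + 2*p*s*r + s^2 * (r^2+t^2) = 1" by (simp add: power2_eq_square algebra_simps)
  hence "p^2 + 2*p*s*r + s^2 = 1" using rt by simp
  moreover have "real_of_int (p^2 + q*s) = p^2 + 2*p*s*r + s^2" using qr by (simp add: power2_eq_square algebra_simps)
  ultimately have "real_of_int (p^2 + q*s) = 1" by simp
  hence h1: "p^2 + q*s = 1" by linarith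
  have cls: "s^2 = 1 \<and> ((p = 0 \<and> q = s) \<or> (p^2 = 1 \<and> q = 0))"
  proof (cases "p = 0")
    case True
    hence "q = s" using qr by simp
    with h1 True show ?thesis by (simp add: power2_eq_square)
  next
    case False
    have "real_of_int ((q-s)^2) = 4 * p^2 * r^2" using qr by (simp add: power2_eq_square algebra_simps)
    also have "\<dots> < 4 * p^2" using r1 False by simp
    finally have "(q-s)^2 < 4*p^2" by linarith
    from int_cls[OF h1 this] show ?thesis
    proof
      assume "s = 0 \<and> p^2 = 1"
      hence "p = 1 \<or> p = -1" by (metis power2_eq_1_iff)
      with \<open>s = 0 \<and> p^2 = 1\<close> a assms(5,6) show ?thesis by auto
    qed auto
  qed
  from cL obtain x y :: int where cxy: "c = of_int x + of_int y * \<tau>" by (auto simp: lat_iff)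
  have "a * cnj c = c" using N1 by (simp add: c_def N_def algebra_simps)
  moreover have "a * cnj c = of_int x * a + of_int y * (a * cnj \<tau>)" by (simp add: cxy algebra_simps)
  ultimately have "c = of_int x * a + of_int y * (of_int q + of_int w * \<tau>)" using aq by simp
  hence "c - (of_int x * a + of_int y * (of_int q + of_int w * \<tau>)) = 0" by simp
  hence "of_real (real_of_int (x - x*p - y*q)) + of_real (real_of_int (y - x*s + y*p)) * \<tau> = 0"
    unfolding cxy a wp by (simp add: algebra_simps)
  from coord_zero[OF assms(1) this] have "x - x*p - y*q = 0" "y - x*s + y*p = 0"
    by (simp only: of_int_eq_0_iff)+
  hence xy: "x = x*p + y*q" "y = x*s - y*p" by simp_all
  define u where "u = s * y"
  have u1: "u * (1 + p) = x" and u2: "u * s = y"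
  proof -
    show "u * s = y" using cls by (simp add: u_def power2_eq_square algebra_simps)
    have s1: "s = 1 \<or> s = -1" using cls by (metis power2_eq_1_iff)
    from cls show "u * (1 + p) = x"
    proof (elim conjE disjE)
      assume "p = 0" "q = s"
      thus ?thesis using xy s1 by (auto simp: u_def)
    next
      assume "p^2 = 1" "q = 0"
      hence "p = 1 \<or> p = -1" by (metis power2_eq_1_iff)
      thus ?thesis using xy s1 \<open>q = 0\<close> by (auto simp: u_def)
    qed
  qed
  define \<gamma> where "\<gamma> = (of_int u :: complex)"
  have g: "\<gamma> + a * cnj \<gamma> = c"
  proof -
    have "\<gamma> + a * cnj \<gamma> = of_int (u * (1+p)) + of_int (u * s) * \<tau>"
      by (simp add: \<gamma>_def a algebra_simps)
    thus ?thesis using u1 u2 cxy by simp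
  qed
  have "antilin a b ((b - \<gamma>)/2) - (b - \<gamma>)/2 = \<gamma>"
  proof -
    have "antilin a b ((b - \<gamma>)/2) - (b - \<gamma>)/2 = (c - a * cnj \<gamma> + \<gamma>)/2"
      by (simp add: antilin_def c_def field_simps)
    also have "\<dots> = \<gamma>" using g by (simp add: field_simps)
    finally show ?thesis .
  qed
  moreover have "\<gamma> \<in> lattice \<tau>" unfolding lat_iff \<gamma>_def by (rule exI[of _ u], rule exI[of _ 0]) simp
  ultimately show ?thesis by metis
qed
end
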